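(* Let $p$ be a prime, $C$ a countable $p$-group, and $A$ a countable abelian group with $p$-primary subgroup $A_p$. Then $\mathrm{PExt}(C,A)$ and $\mathrm{PExt}(C,A_p)$ are Borel-definably isomorphic.
   Context: For countable $C,A$: $\mathsf Z(C,A)$ is the Polish group (closed in $A^{C\times C}$) of normalized symmetric 2-cocycles ($c(x,0)=0$, $c(x,y)=c(y,x)$, $c(y,z)-c(x+y,z)+c(x,y+z)-c(x,y)=0$), $\mathsf B(C,A)$ the subgroup of coboundaries $c(x,y)=\phi(y)-\phi(x+y)+\phi(x)$, $\mathsf B_{\mathrm w}(C,A)$ the subgroup of cocycles whose restriction to $S\times S$ is a coboundary for every finite $S\le C$; $\mathrm{PExt}(C,A)=\mathsf B_{\mathrm w}(C,A)/\mathsf B(C,A)$, a group with a Polish cover. A homomorphism between groups with a Polish cover $\hat G/N\to\hat H/M$ is Borel-definable if it is induced by a Borel function $\hat G\to\hat H$; a Borel-definable isomorphism is a bijective Borel-definable homomorphism. *)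

theory Defs
  imports "HOL-Analysis.Analysis"
begin

primrec nmul :: "nat \<Rightarrow> 'a::monoid_add \<Rightarrow> 'a" where
  "nmul 0 x = 0"
| "nmul (Suc n) x = x + nmul n x"

definition is_p_group :: "nat \<Rightarrow> 'c::ab_group_add itself \<Rightarrow> bool" where
  "is_p_group p _ \<longleftrightarrow> (\<forall>x::'c. \<exists>n. nmul (p ^ n) x = 0)"

definition p_primary :: "nat \<Rightarrow> 'a::ab_group_add set" where
  "p_primary p = {a. \<exists>n. nmul (p ^ n) a = 0}"

text \<open>Normalized symmetric 2-cocycles C x C -> A' where A' is a subgroup of the type 'a
  (given as a set S).\<close>
definition Zc :: "'a::ab_group_add set \<Rightarrow> ('c::ab_group_add \<times> 'c \<Rightarrow> 'a) set" where
  "Zc S = {c. (\<forall>x y. c (x, y) \<in> S) \<and> (\<forall>x. c (x, 0) = 0) \<and> (\<forall>x y. c (x, y) = c (y, x)) \<and>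
               (\<forall>x y z. c (y, z) - c (x + y, z) + c (x, y + z) - c (x, y) = 0)}"

definition Bc :: "'a::ab_group_add set \<Rightarrow> ('c::ab_group_add \<times> 'c \<Rightarrow> 'a) set" where
  "Bc S = {c \<in> Zc S. \<exists>\<phi>. (\<forall>x. \<phi> x \<in> S) \<and> (\<forall>x y. c (x, y) = \<phi> y - \<phi> (x + y) + \<phi> x)}"

definition finite_subgroup :: "'c::ab_group_add set \<Rightarrow> bool" where
  "finite_subgroup S0 \<longleftrightarrow> finite S0 \<and> 0 \<in> S0 \<and> (\<forall>x\<in>S0. \<forall>y\<in>S0. x + y \<in> S0) \<and> (\<forall>x\<in>S0. - x \<in> S0)"

definition Bwc :: "'a::ab_group_add set \<Rightarrow> ('c::ab_group_add \<times> 'c \<Rightarrow> 'a) set" where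
  "Bwc S = {c \<in> Zc S. \<forall>S0. finite_subgroup S0 \<longrightarrow>
              (\<exists>\<phi>. (\<forall>x\<in>S0. \<phi> x \<in> S) \<and> (\<forall>x\<in>S0. \<forall>y\<in>S0. c (x, y) = \<phi> y - \<phi> (x + y) + \<phi> x))}"

definition cocycle_top :: "'a::ab_group_add set \<Rightarrow> ('c::ab_group_add \<times> 'c \<Rightarrow> 'a) topology" where
  "cocycle_top S = product_topology (\<lambda>_. discrete_topology S) UNIV"

definition borel_of :: "'a topology \<Rightarrow> 'a measure" where
  "borel_of X = sigma (topspace X) {U. openin X U}"

text \<open>Borel-definable isomorphism PExt(C,S1) -> PExt(C,S2), i.e. Bw(C,S1)/B(C,S1) -> Bw(C,S2)/B(C,S2),
  induced by the Borel function f.\<close>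
definition PExt_borel_iso ::
  "'a::ab_group_add set \<Rightarrow> 'b::ab_group_add set \<Rightarrow> (('c::ab_group_add \<times> 'c \<Rightarrow> 'a) \<Rightarrow> ('c \<times> 'c \<Rightarrow> 'b)) \<Rightarrow> bool" where
  "PExt_borel_iso S1 S2 f \<longleftrightarrow>
     f \<in> measurable (borel_of (subtopology (cocycle_top S1) (Bwc S1)))
                    (borel_of (subtopology (cocycle_top S2) (Bwc S2))) \<and>
     (\<forall>x\<in>Bwc S1. \<forall>y\<in>Bwc S1. (\<lambda>u. x u - y u) \<in> Bc S1 \<longrightarrow> (\<lambda>u. f x u - f y u) \<in> Bc S2) \<and>
     (\<forall>x\<in>Bwc S1. \<forall>y\<in>Bwc S1. (\<lambda>u. f (\<lambda>v. x v + y v) u - (f x u + f y u)) \<in> Bc S2) \<and>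
     (\<forall>x\<in>Bwc S1. \<forall>y\<in>Bwc S1. (\<lambda>u. f x u - f y u) \<in> Bc S2 \<longrightarrow> (\<lambda>u. x u - y u) \<in> Bc S1) \<and>
     (\<forall>z\<in>Bwc S2. \<exists>x\<in>Bwc S1. (\<lambda>u. f x u - z u) \<in> Bc S2)"

end

theory Submission
  imports Defs
begin


lemma nmul_add: "nmul (m + n) x = nmul m x + nmul n x"
  by (induction m) (simp_all add: add.assoc)

lemma nmul_mult: "nmul (m * n) x = nmul m (nmul n x)"
  by (induction m) (simp_all add: nmul_add)

lemma nmul_zero [simp]: "nmul n (0::'a::monoid_add) = 0"
  by (induction n) simp_all

lemma nmul_plus: "nmul n ((x::'a::ab_group_add) + y) = nmul n x + nmul n y"
  by (induction n) (simp_all add: algebra_simps)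

lemma nmul_minus: "nmul n (- (x::'a::ab_group_add)) = - nmul n x"
  by (induction n) (simp_all add: algebra_simps)

lemma p_primary_0: "0 \<in> p_primary p"
  by (auto simp: p_primary_def)

lemma p_primary_add:
  assumes "u \<in> p_primary p" "v \<in> p_primary p" shows "u + v \<in> p_primary p"
proof -
  obtain a b where a: "nmul (p^a) u = 0" and b: "nmul (p^b) v = 0"
    using assms by (auto simp: p_primary_def)
  have "nmul (p^(a+b)) u = 0" by (simp add: power_add mult.commute[of "p^a"] nmul_mult a)
  moreover have "nmul (p^(a+b)) v = 0" by (simp add: power_add nmul_mult b)
  ultimately show ?thesis unfolding p_primary_def
    by (intro CollectI exI[of _ "a+b"]) (simp add: nmul_plus)
qed

lemma p_primary_uminus: "u \<in> p_primary p \<Longrightarrow> - u \<in> p_primary p"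
  by (auto simp: p_primary_def nmul_minus)

lemma p_primary_diff: "u \<in> p_primary p \<Longrightarrow> v \<in> p_primary p \<Longrightarrow> u - v \<in> p_primary p"
  using p_primary_add[of u p "-v"] p_primary_uminus[of v p] by simp

definition cob :: "('c::ab_group_add \<Rightarrow> 'a::ab_group_add) \<Rightarrow> 'c \<times> 'c \<Rightarrow> 'a" where
  "cob \<theta> u = \<theta> (snd u) - \<theta> (fst u + snd u) + \<theta> (fst u)"

lemma cob_pair [simp]: "cob \<theta> (x, y) = \<theta> y - \<theta> (x + y) + \<theta> x"
  by (simp add: cob_def)

lemma atoms2: "(b::'a::ab_group_add) - c + a = 0 \<Longrightarrow> c = a + b"
proof -
  assume h: "b - c + a = 0"
  have "c = c + (b - c + a)" using h by simp
  also have "... = a + b" by (simp add: algebra_simps)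
  finally show ?thesis .
qed

lemma atoms3: "(a1::'a::ab_group_add) - b1 + d1 = a2 - b2 + d2 \<Longrightarrow> (a1 - a2) - (b1 - b2) + (d1 - d2) = 0"
proof -
  assume h: "a1 - b1 + d1 = a2 - b2 + d2"
  have "(a1 - a2) - (b1 - b2) + (d1 - d2) = (a1 - b1 + d1) - (a2 - b2 + d2)" by (simp add: algebra_simps)
  also have "... = 0" using h by simp
  finally show ?thesis .
qed

lemma hom_primary:
  fixes h :: "'c::ab_group_add \<Rightarrow> 'a::ab_group_add"
  assumes pg: "is_p_group p TYPE('c)"
    and H0: "0 \<in> H" and Hadd: "\<forall>a\<in>H. \<forall>b\<in>H. a + b \<in> H"
    and hh: "\<forall>a\<in>H. \<forall>b\<in>H. h b - h (a + b) + h a = 0"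
    and z: "z \<in> H"
  shows "h z \<in> p_primary p"
proof -
  have h0: "h 0 = 0" using hh H0 by force
  have "nmul n z \<in> H \<and> h (nmul n z) = nmul n (h z)" for n
  proof (induction n)
    case 0 then show ?case using H0 h0 by simp
  next
    case (Suc n)
    have "h (nmul n z) - h (z + nmul n z) + h z = 0" using hh z Suc by blast
    then have "h (z + nmul n z) = h z + h (nmul n z)" by (rule atoms2)
    then show ?case using Suc Hadd z by (simp add: add.commute)
  qed
  moreover obtain e where "nmul (p^e) z = 0" using pg by (auto simp: is_p_group_def)
  ultimately have "nmul (p^e) (h z) = 0" using h0 by metis
  then show ?thesis unfolding p_primary_def by blast
qed

lemma cob_eq_primary:
  fixes t1 t2 :: "'c::ab_group_add \<Rightarrow> 'a::ab_group_add"
  assumes pg: "is_p_group p TYPE('c)" and H: "finite_subgroup H"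
    and eq: "\<forall>a\<in>H. \<forall>b\<in>H. cob t1 (a, b) = cob t2 (a, b)"
    and z: "z \<in> H"
  shows "t1 z - t2 z \<in> p_primary p"
proof -
  have H0: "0 \<in> H" and Ha: "\<forall>a\<in>H. \<forall>b\<in>H. a + b \<in> H" using H by (auto simp: finite_subgroup_def)
  have hh: "\<forall>a\<in>H. \<forall>b\<in>H. (t1 b - t2 b) - (t1 (a + b) - t2 (a + b)) + (t1 a - t2 a) = 0"
  proof (intro ballI)
    fix a b assume "a \<in> H" "b \<in> H"
    then have "t1 b - t1 (a + b) + t1 a = t2 b - t2 (a + b) + t2 a" using eq by (simp only: cob_pair)
    then show "(t1 b - t2 b) - (t1 (a + b) - t2 (a + b)) + (t1 a - t2 a) = 0" by (rule atoms3)
  qed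
  show ?thesis
    using hom_primary[OF pg H0 Ha, of "\<lambda>w. t1 w - t2 w", OF hh z] by simp
qed

definition ext_grp :: "'c::ab_group_add set \<Rightarrow> 'c \<Rightarrow> 'c set" where
  "ext_grp H g = {h + nmul k g | h k. h \<in> H}"

lemma ext_grp_fs:
  fixes g :: "'c::ab_group_add"
  assumes p: "prime p" and pg: "is_p_group p TYPE('c)" and H: "finite_subgroup H"
  shows "finite_subgroup (ext_grp H g)"
proof -
  obtain N where gN: "nmul (p^N) g = 0" using pg by (auto simp: is_p_group_def)
  define q where "q = p^N"
  have q0: "q > 0" using p by (simp add: q_def prime_gt_0_nat)
  have gq: "nmul q g = 0" using gN q_def by simp
  have md: "nmul k g = nmul (k mod q) g" for k
  proof -
    have "nmul k g = nmul (k div q * q + k mod q) g" by (metis div_mult_mod_eq)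
    also have "... = nmul (k div q) (nmul q g) + nmul (k mod q) g" by (simp only: nmul_add nmul_mult)
    also have "... = nmul (k mod q) g" by (simp add: gq)
    finally show ?thesis .
  qed
  have neg: "- nmul k g = nmul (q*k - k) g" for k
  proof -
    have "k \<le> q * k" using q0 by simp
    then have "nmul (q*k - k) g + nmul k g = nmul (q*k) g"
      by (simp add: nmul_add[symmetric])
    also have "... = 0" by (simp add: mult.commute[of q] nmul_mult gq)
    finally have "nmul (q*k - k) g = - nmul k g" by (simp only: eq_neg_iff_add_eq_0)
    then show ?thesis by simp
  qed
  have fin: "finite (ext_grp H g)"
  proof -
    have "ext_grp H g \<subseteq> (\<lambda>(h,k). h + nmul k g) ` (H \<times> {..<q})"
    proof
      fix x assume "x \<in> ext_grp H g"
      then obtain h k where "h \<in> H" "x = h + nmul k g" by (auto simp: ext_grp_def)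
      then show "x \<in> (\<lambda>(h,k). h + nmul k g) ` (H \<times> {..<q})"
        using md[of k] q0 by (auto intro!: image_eqI[of _ _ "(h, k mod q)"])
    qed
    moreover have "finite H" using H by (simp add: finite_subgroup_def)
    ultimately show ?thesis by (meson finite_SigmaI finite_imageI finite_lessThan finite_subset)
  qed
  have z: "0 \<in> ext_grp H g"
    using H unfolding ext_grp_def finite_subgroup_def by (auto intro!: exI[of _ 0])
  have a: "\<forall>x\<in>ext_grp H g. \<forall>y\<in>ext_grp H g. x + y \<in> ext_grp H g"
  proof (intro ballI)
    fix x y assume "x \<in> ext_grp H g" "y \<in> ext_grp H g"
    then obtain h k h' k' where "h \<in> H" "h' \<in> H" "x = h + nmul k g" "y = h' + nmul k' g"
      by (auto simp: ext_grp_def)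
    moreover have "h + h' \<in> H" using H calculation by (auto simp: finite_subgroup_def)
    ultimately show "x + y \<in> ext_grp H g" unfolding ext_grp_def
      by (intro CollectI exI[of _ "h+h'"] exI[of _ "k+k'"]) (simp add: nmul_add algebra_simps)
  qed
  have n: "\<forall>x\<in>ext_grp H g. - x \<in> ext_grp H g"
  proof (intro ballI)
    fix x assume "x \<in> ext_grp H g"
    then obtain h k where "h \<in> H" "x = h + nmul k g"
      by (auto simp: ext_grp_def)
    moreover have "- h \<in> H" using H calculation by (auto simp: finite_subgroup_def)
    ultimately show "- x \<in> ext_grp H g" unfolding ext_grp_def
      by (intro CollectI exI[of _ "-h"] exI[of _ "q*k-k"]) (simp add: neg[symmetric])
  qed
  show ?thesis using fin z a n by (simp add: finite_subgroup_def)
qed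

lemma ext_grp_sub1: "H \<subseteq> ext_grp H g"
proof
  fix x assume "x \<in> H"
  then have "x = x + nmul 0 g \<and> x \<in> H" by simp
  then show "x \<in> ext_grp H g" unfolding ext_grp_def by blast
qed

lemma ext_grp_sub2: "0 \<in> H \<Longrightarrow> g \<in> ext_grp H g"
proof -
  assume "0 \<in> H"
  then have "g = 0 + nmul (Suc 0) g \<and> 0 \<in> H" by simp
  then show "g \<in> ext_grp H g" unfolding ext_grp_def by blast
qed

lemmas ext_grp_sub = ext_grp_sub1 ext_grp_sub2

primrec Cs :: "nat \<Rightarrow> 'c::{ab_group_add,countable} set" where
  "Cs 0 = ext_grp {0} (from_nat 0)"
| "Cs (Suc n) = ext_grp (Cs n) (from_nat (Suc n))"

lemma Cs_fs:
  assumes p: "prime p" and pg: "is_p_group p TYPE('c::{ab_group_add,countable})"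
  shows "finite_subgroup (Cs n :: 'c set)"
proof (induction n)
  case 0
  have "finite_subgroup {0::'c}" by (simp add: finite_subgroup_def)
  then show ?case using ext_grp_fs[OF p pg] by simp
next
  case (Suc n) then show ?case using ext_grp_fs[OF p pg] by simp
qed

lemma Cs_0: "(0::'c::{ab_group_add,countable}) \<in> Cs n"
proof (induction n)
  case 0 then show ?case using ext_grp_sub1[of "{0::'c}"] by auto
next
  case (Suc n) then show ?case using ext_grp_sub1[of "Cs n"] by auto
qed

lemma Cs_mono: "m \<le> n \<Longrightarrow> (Cs m :: 'c::{ab_group_add,countable} set) \<subseteq> Cs n"
proof (induction n)
  case 0 then show ?case by simp
next
  case (Suc n)
  have "Cs n \<subseteq> (Cs (Suc n) :: 'c set)" using ext_grp_sub1[of "Cs n"] by simp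
  then show ?case using Suc by (metis le_Suc_eq order_trans order_refl)
qed

lemma Cs_in: "(x::'c::{ab_group_add,countable}) \<in> Cs (to_nat x)"
proof (cases "to_nat x")
  case 0
  then have "x = from_nat 0" by (metis from_nat_to_nat)
  have "from_nat 0 \<in> (Cs 0 :: 'c set)" using ext_grp_sub2[of "{0::'c}"] by simp
  then show ?thesis using 0 \<open>x = from_nat 0\<close> by metis
next
  case (Suc n)
  then have "x = from_nat (Suc n)" by (metis from_nat_to_nat)
  have "from_nat (Suc n) \<in> (Cs (Suc n) :: 'c set)" using ext_grp_sub2[OF Cs_0[of n]] by simp
  then show ?thesis using Suc \<open>x = from_nat (Suc n)\<close> by metis
qed

lemma Cs_finite_cover:
  "finite F \<Longrightarrow> \<exists>m. F \<subseteq> (Cs m :: 'c::{ab_group_add,countable} set)"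
proof (induction F rule: finite_induct)
  case empty then show ?case by simp
next
  case (insert x F)
  then obtain m where "F \<subseteq> Cs m" by blast
  have "F \<subseteq> Cs (max m (to_nat x))" using \<open>F \<subseteq> Cs m\<close> Cs_mono[of m "max m (to_nat x)"] by (meson subset_trans max.cobounded1)
  moreover have "x \<in> Cs (max m (to_nat x))" using Cs_mono[of "to_nat x" "max m (to_nat x)"] Cs_in[of x] by auto
  ultimately show ?case by blast
qed

lemma Cs_add: "prime p \<Longrightarrow> is_p_group p TYPE('c) \<Longrightarrow> x \<in> Cs n \<Longrightarrow> y \<in> Cs n \<Longrightarrow> x + y \<in> (Cs n :: 'c::{ab_group_add,countable} set)"
  using Cs_fs[of p n] by (auto simp: finite_subgroup_def)

lemma Cs_finite: "prime p \<Longrightarrow> is_p_group p TYPE('c) \<Longrightarrow> finite (Cs n :: 'c::{ab_group_add,countable} set)"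
  using Cs_fs[of p n] by (auto simp: finite_subgroup_def)

definition Psi :: "nat \<Rightarrow> ('c::{ab_group_add,countable} \<times> 'c \<Rightarrow> 'a::ab_group_add) \<Rightarrow> 'c \<Rightarrow> 'a" where
  "Psi n c = (SOME \<psi>. \<forall>x\<in>Cs n. \<forall>y\<in>Cs n. c (x, y) = cob \<psi> (x, y))"

definition good :: "('c::{ab_group_add,countable} \<times> 'c \<Rightarrow> 'a::ab_group_add) \<Rightarrow> bool" where
  "good c \<longleftrightarrow> (\<forall>n. \<exists>\<psi>. \<forall>x\<in>Cs n. \<forall>y\<in>Cs n. c (x, y) = cob \<psi> (x, y))"

definition Phi :: "('c::{ab_group_add,countable} \<times> 'c \<Rightarrow> 'a::ab_group_add) \<Rightarrow> 'c \<Rightarrow> 'a" where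
  "Phi c z = Psi (to_nat z) c z"

definition Fm :: "('c::{ab_group_add,countable} \<times> 'c \<Rightarrow> 'a::ab_group_add) \<Rightarrow> 'c \<times> 'c \<Rightarrow> 'a" where
  "Fm c u = c u - cob (Phi c) u"

lemma Psi_spec: "good c \<Longrightarrow> x \<in> Cs n \<Longrightarrow> y \<in> Cs n \<Longrightarrow> c (x, y) = cob (Psi n c) (x, y)"
  unfolding Psi_def good_def by (rule someI_ex[where P="\<lambda>\<psi>. \<forall>x\<in>Cs n. \<forall>y\<in>Cs n. c (x, y) = cob \<psi> (x, y)", rule_format]) auto

lemma Psi_cong: "\<forall>x\<in>Cs n. \<forall>y\<in>Cs n. c (x, y) = c' (x, y) \<Longrightarrow> Psi n c = Psi n c'"
  unfolding Psi_def by (rule arg_cong[where f=Eps]) auto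

lemma Psi_0: "good c \<Longrightarrow> c (0, 0) = 0 \<Longrightarrow> Psi n c 0 = 0"
  using Psi_spec[of c 0 n 0] Cs_0[of n] by simp

lemma Phi_0: "good c \<Longrightarrow> c (0, 0) = 0 \<Longrightarrow> Phi c 0 = 0"
  by (simp add: Phi_def Psi_0)

lemma Psi_levels:
  assumes p: "prime p" and pg: "is_p_group p TYPE('c::{ab_group_add,countable})"
    and g: "good (c :: 'c \<times> 'c \<Rightarrow> 'a::ab_group_add)" and zj: "z \<in> Cs j" and zl: "z \<in> Cs l"
  shows "Psi l c z - Psi j c z \<in> p_primary p"
proof -
  have main: "Psi l c z - Psi j c z \<in> p_primary p" if "j \<le> l" "z \<in> Cs j" for j l
  proof (rule cob_eq_primary[OF pg Cs_fs[OF p pg]])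
    show "\<forall>a\<in>Cs j. \<forall>b\<in>Cs j. cob (Psi l c) (a, b) = cob (Psi j c) (a, b)"
      using Psi_spec[OF g] Cs_mono[OF \<open>j \<le> l\<close>] by (metis subsetD)
  qed (rule that(2))
  show ?thesis
  proof (cases "j \<le> l")
    case True then show ?thesis using main zj by blast
  next
    case False
    then have "Psi j c z - Psi l c z \<in> p_primary p" using main zl by simp
    then show ?thesis using p_primary_uminus by fastforce
  qed
qed

lemma Phi_vs_Psi:
  assumes p: "prime p" and pg: "is_p_group p TYPE('c::{ab_group_add,countable})"
    and g: "good (c :: 'c \<times> 'c \<Rightarrow> 'a::ab_group_add)" and z: "z \<in> Cs m"
  shows "Psi m c z - Phi c z \<in> p_primary p"
  unfolding Phi_def using Psi_levels[OF p pg g Cs_in z] .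

lemma good_Bwc:
  assumes p: "prime p" and pg: "is_p_group p TYPE('c::{ab_group_add,countable})"
    and c: "(c :: 'c \<times> 'c \<Rightarrow> 'a::ab_group_add) \<in> Bwc S"
  shows "good c"
  unfolding good_def
proof
  fix n
  obtain \<phi> where "\<forall>x\<in>Cs n. \<forall>y\<in>Cs n. c (x, y) = \<phi> y - \<phi> (x + y) + \<phi> x"
    using c Cs_fs[OF p pg, of n] unfolding Bwc_def by blast
  then show "\<exists>\<psi>. \<forall>x\<in>Cs n. \<forall>y\<in>Cs n. c (x, y) = cob \<psi> (x, y)" by auto
qed

lemma good_add: "good x \<Longrightarrow> good y \<Longrightarrow> good (\<lambda>v. x v + y v)"
  unfolding good_def
proof
  fix n assume gx: "\<forall>n. \<exists>\<psi>. \<forall>a\<in>Cs n. \<forall>b\<in>Cs n. x (a, b) = cob \<psi> (a, b)"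
    and gy: "\<forall>n. \<exists>\<psi>. \<forall>a\<in>Cs n. \<forall>b\<in>Cs n. y (a, b) = cob \<psi> (a, b)"
  obtain \<psi>1 where 1: "\<forall>a\<in>Cs n. \<forall>b\<in>Cs n. x (a, b) = cob \<psi>1 (a, b)" using gx by blast
  obtain \<psi>2 where 2: "\<forall>a\<in>Cs n. \<forall>b\<in>Cs n. y (a, b) = cob \<psi>2 (a, b)" using gy by blast
  show "\<exists>\<psi>. \<forall>a\<in>Cs n. \<forall>b\<in>Cs n. x (a, b) + y (a, b) = cob \<psi> (a, b)"
    using 1 2 by (intro exI[of _ "\<lambda>w. \<psi>1 w + \<psi>2 w"]) (simp add: algebra_simps)
qed

lemma cocycle_atoms: "((a::'b::ab_group_add) - b + d) - (a - e + f) + (b - e + g) - (d - f + g) = 0"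
  by (simp add: algebra_simps)

lemma cob_sym: "cob \<phi> (x, y) = cob \<phi> (y, x)"
  by (simp add: add.commute)

lemma cob_cocycle: "cob \<phi> (y, z) - cob \<phi> (x + y, z) + cob \<phi> (x, y + z) - cob \<phi> (x, y) = 0"
  unfolding cob_pair add.assoc by (rule cocycle_atoms)

lemma cob_Bc:
  assumes th: "\<forall>z. \<theta> z \<in> S" and t0: "\<theta> 0 = 0" and s0: "0 \<in> S"
    and sa: "\<forall>a\<in>S. \<forall>b\<in>S. a + b \<in> S" and sn: "\<forall>a\<in>S. - a \<in> S"
    and eq: "\<forall>u. c u = cob \<theta> u"
  shows "c \<in> Bc S"
proof -
  have ceq: "c (x, y) = \<theta> y - \<theta> (x + y) + \<theta> x" for x y using eq[rule_format, of "(x,y)"] by simp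
  have cS: "c (x, y) \<in> S" for x y
  proof -
    have "- \<theta> (x + y) \<in> S" using th sn by blast
    then have "\<theta> y + - \<theta> (x + y) \<in> S" using th sa by blast
    then have "\<theta> y + - \<theta> (x + y) + \<theta> x \<in> S" using th sa by blast
    then show ?thesis using ceq by simp
  qed
  have z: "c \<in> Zc S" unfolding Zc_def
  proof (intro CollectI conjI allI)
    fix x y show "c (x, y) \<in> S" by (rule cS)
  next
    fix x show "c (x, 0) = 0" by (simp add: ceq t0)
  next
    fix x y show "c (x, y) = c (y, x)" by (simp add: ceq add.commute)
  next
    fix x y z show "c (y, z) - c (x + y, z) + c (x, y + z) - c (x, y) = 0"
      unfolding ceq add.assoc by (rule cocycle_atoms)
  qed
  show ?thesis unfolding Bc_def using z th ceq by blast
qed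

lemma p_primary_closed: "0 \<in> p_primary p" "\<forall>a\<in>p_primary p. \<forall>b\<in>p_primary p. a + b \<in> p_primary p"
  "\<forall>a\<in>p_primary p. - a \<in> p_primary p"
  using p_primary_0 p_primary_add p_primary_uminus by blast+

lemma rearr3: "((a::'a::ab_group_add) - b + d) - (a' - b' + d') = (a - a') - (b - b') + (d - d')"
  by (simp add: algebra_simps)

lemma rearr4: "(a::'a::ab_group_add) - a' - (b - b') + (d - d') - (e - e') = (a - b + d - e) - (a' - b' + d' - e')"
  by (simp add: algebra_simps)

lemma Fm_Zc:
  assumes p: "prime p" and pg: "is_p_group p TYPE('c::{ab_group_add,countable})"
    and cz: "(c :: 'c \<times> 'c \<Rightarrow> 'a::ab_group_add) \<in> Zc UNIV" and g: "good c"
  shows "Fm c \<in> Zc (p_primary p)"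
proof -
  have c0: "c (x, 0) = 0" for x using cz unfolding Zc_def by blast
  have cs: "c (x, y) = c (y, x)" for x y using cz unfolding Zc_def by blast
  have cc: "c (y, z) - c (x + y, z) + c (x, y + z) - c (x, y) = 0" for x y z using cz unfolding Zc_def by blast
  have P0: "Phi c 0 = 0" using Phi_0[OF g c0] .
  have vals: "Fm c (x, y) \<in> p_primary p" for x y
  proof -
    define m where "m = max (to_nat x) (to_nat y)"
    have xm: "x \<in> Cs m" using Cs_in[of x] Cs_mono[of "to_nat x" m] by (auto simp: m_def)
    have ym: "y \<in> Cs m" using Cs_in[of y] Cs_mono[of "to_nat y" m] by (auto simp: m_def)
    have xym: "x + y \<in> Cs m" using Cs_add[OF p pg xm ym] .
    have e: "Fm c (x, y) = (Psi m c y - Phi c y) - (Psi m c (x + y) - Phi c (x + y)) + (Psi m c x - Phi c x)"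
      by (simp only: Fm_def Psi_spec[OF g xm ym] cob_pair rearr3)
    have a1: "Psi m c y - Phi c y \<in> p_primary p" by (rule Phi_vs_Psi[OF p pg g ym])
    have a2: "Psi m c (x + y) - Phi c (x + y) \<in> p_primary p" by (rule Phi_vs_Psi[OF p pg g xym])
    have a3: "Psi m c x - Phi c x \<in> p_primary p" by (rule Phi_vs_Psi[OF p pg g xm])
    show ?thesis unfolding e by (rule p_primary_add[OF p_primary_diff[OF a1 a2] a3])
  qed
  show ?thesis unfolding Zc_def
  proof (intro CollectI conjI allI)
    fix x y show "Fm c (x, y) \<in> p_primary p" by (rule vals)
  next
    fix x show "Fm c (x, 0) = 0" using c0[of x] P0 by (simp add: Fm_def)
  next
    fix x y show "Fm c (x, y) = Fm c (y, x)" unfolding Fm_def cob_sym[of _ x y] cs[of x y] ..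
  next
    fix x y z
    have "cob (Phi c) (y, z) - cob (Phi c) (x + y, z) + cob (Phi c) (x, y + z) - cob (Phi c) (x, y) = 0"
      by (rule cob_cocycle)
    then show "Fm c (y, z) - Fm c (x + y, z) + Fm c (x, y + z) - Fm c (x, y) = 0"
      using cc[where x=x and y=y and z=z] unfolding Fm_def rearr4 by simp
  qed
qed

lemma Fm_Bwc:
  assumes p: "prime p" and pg: "is_p_group p TYPE('c::{ab_group_add,countable})"
    and cz: "(c :: 'c \<times> 'c \<Rightarrow> 'a::ab_group_add) \<in> Zc UNIV" and g: "good c"
  shows "Fm c \<in> Bwc (p_primary p)"
  unfolding Bwc_def
proof (intro CollectI conjI allI impI)
  show "Fm c \<in> Zc (p_primary p)" using Fm_Zc[OF p pg cz g] .
  fix S0 :: "'c set" assume S0: "finite_subgroup S0"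
  then obtain m where m: "S0 \<subseteq> Cs m" using Cs_finite_cover[of S0] unfolding finite_subgroup_def by blast
  show "\<exists>\<phi>. (\<forall>x\<in>S0. \<phi> x \<in> p_primary p) \<and> (\<forall>x\<in>S0. \<forall>y\<in>S0. Fm c (x, y) = \<phi> y - \<phi> (x + y) + \<phi> x)"
  proof (intro exI[of _ "\<lambda>z. Psi m c z - Phi c z"] conjI ballI)
    fix x assume "x \<in> S0" then show "Psi m c x - Phi c x \<in> p_primary p"
      using m by (intro Phi_vs_Psi[OF p pg g]) blast
  next
    fix x y assume "x \<in> S0" "y \<in> S0"
    then have cxy: "c (x, y) = cob (Psi m c) (x, y)" using Psi_spec[OF g, of x m y] m by blast
    show "Fm c (x, y) = (Psi m c y - Phi c y) - (Psi m c (x + y) - Phi c (x + y)) + (Psi m c x - Phi c x)"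
      by (simp only: Fm_def cxy cob_pair rearr3)
  qed
qed




lemma cob_lin: "cob (\<lambda>w. f w - g w + h w) u = cob f u - cob g u + cob h u"
  by (simp add: cob_def algebra_simps)

lemma cob_lin2: "cob (\<lambda>w. f w + g w - h w) u = cob f u + cob g u - cob h u"
  by (simp add: cob_def algebra_simps)

lemma cob_diff: "cob (\<lambda>w. f w - g w) u = cob f u - cob g u"
  by (simp add: cob_def algebra_simps)

lemma cob_add: "cob (\<lambda>w. f w + g w) u = cob f u + cob g u"
  by (simp add: cob_def algebra_simps)

lemma cob_neg: "cob (\<lambda>w. - f w) u = - cob f u"
  by (simp add: cob_def algebra_simps)

lemma Bwc_Zc: "c \<in> Bwc S \<Longrightarrow> c \<in> Zc S"
  by (simp add: Bwc_def)

lemma Zc_0: "c \<in> Zc S \<Longrightarrow> c (x, 0) = 0"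
  unfolding Zc_def by blast

lemma cont_meas:
  assumes "continuous_map X Y f"
  shows "f \<in> measurable (borel_of X) (borel_of Y)"
proof -
  have sp: "space (borel_of X) = topspace X" by (simp add: borel_of_def space_measure_of_conv)
  have ss: "sets (borel_of X) = sigma_sets (topspace X) {U. openin X U}"
    unfolding borel_of_def by (rule sets_measure_of) (auto dest: openin_subset)
  show ?thesis unfolding borel_of_def[of Y]
  proof (rule measurable_measure_of)
    show "{U. openin Y U} \<subseteq> Pow (topspace Y)" by (auto dest: openin_subset)
    show "f \<in> space (borel_of X) \<rightarrow> topspace Y" using assms sp by (simp add: continuous_map_def)
    fix U assume "U \<in> {U. openin Y U}"
    then have "openin X {x \<in> topspace X. f x \<in> U}" using assms openin_continuous_map_preimage by blast
    moreover have "f -` U \<inter> space (borel_of X) = {x \<in> topspace X. f x \<in> U}" using sp by auto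
    ultimately show "f -` U \<inter> space (borel_of X) \<in> sets (borel_of X)" unfolding ss
      by (auto intro: sigma_sets.Basic)
  qed
qed

lemma cont_lc:
  assumes "g \<in> topspace X \<rightarrow> T"
    and "\<And>c0. c0 \<in> topspace X \<Longrightarrow> \<exists>V. openin X V \<and> c0 \<in> V \<and> (\<forall>c\<in>V. g c = g c0)"
  shows "continuous_map X (discrete_topology T) g"
  unfolding continuous_map_def
proof (intro conjI allI impI)
  show "g \<in> topspace X \<rightarrow> topspace (discrete_topology T)" using assms(1) by simp
  fix U assume "openin (discrete_topology T) U"
  show "openin X {x \<in> topspace X. g x \<in> U}"
    unfolding openin_subopen[of X "{x \<in> topspace X. g x \<in> U}"]
  proof
    fix c0 assume c0: "c0 \<in> {x \<in> topspace X. g x \<in> U}"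
    then have c0t: "c0 \<in> topspace X" and gU: "g c0 \<in> U" by auto
    obtain V where V: "openin X V" "c0 \<in> V" "\<forall>c\<in>V. g c = g c0" using assms(2)[OF c0t] by blast
    have "V \<subseteq> topspace X" using openin_subset[OF V(1)] .
    then have "V \<subseteq> {x \<in> topspace X. g x \<in> U}" using V(3) gU by auto
    then show "\<exists>T. openin X T \<and> c0 \<in> T \<and> T \<subseteq> {x \<in> topspace X. g x \<in> U}" using V(1,2) by blast
  qed
qed

lemma cyl_open:
  assumes "finite D"
  shows "openin (cocycle_top (UNIV::'a::ab_group_add set)) {c :: 'c::ab_group_add \<times> 'c \<Rightarrow> 'a. \<forall>d\<in>D. c d = c0 d}"
proof -
  let ?X = "cocycle_top (UNIV::'a set) :: ('c \<times> 'c \<Rightarrow> 'a) topology"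
  have top: "topspace ?X = UNIV" by (simp add: cocycle_top_def)
  have proj: "continuous_map ?X (discrete_topology UNIV) (\<lambda>c. c d)" for d
    unfolding cocycle_top_def
    using continuous_map_product_projection[of d UNIV "\<lambda>_. discrete_topology (UNIV::'a set)"] by simp
  have "openin ?X ((\<Inter>d\<in>D. {c \<in> topspace ?X. c d \<in> {c0 d}}) \<inter> topspace ?X)"
    using assms by (intro openin_INT openin_continuous_map_preimage[OF proj]) auto
  moreover have "(\<Inter>d\<in>D. {c \<in> topspace ?X. c d \<in> {c0 d}}) \<inter> topspace ?X = {c. \<forall>d\<in>D. c d = c0 d}"
    by (auto simp: top)
  ultimately show ?thesis by simp
qed

lemma Fm_into:
  assumes p: "prime p" and pg: "is_p_group p TYPE('c::{ab_group_add,countable})"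
    and c: "(c :: 'c \<times> 'c \<Rightarrow> 'a::ab_group_add) \<in> Bwc UNIV"
  shows "Fm c \<in> Bwc (p_primary p)"
  using Fm_Bwc[OF p pg Bwc_Zc[OF c] good_Bwc[OF p pg c]] .

lemma Fm_cont:
  assumes p: "prime p" and pg: "is_p_group p TYPE('c::{ab_group_add,countable})"
  shows "continuous_map (subtopology (cocycle_top UNIV) (Bwc UNIV))
           (subtopology (cocycle_top (p_primary p)) (Bwc (p_primary p))) (Fm :: ('c \<times> 'c \<Rightarrow> 'a::{ab_group_add,countable}) \<Rightarrow> _)"
proof (rule continuous_map_into_subtopology)
  let ?X = "subtopology (cocycle_top (UNIV::'a set)) (Bwc UNIV) :: ('c \<times> 'c \<Rightarrow> 'a) topology"
  have tX: "topspace ?X = Bwc UNIV" by (simp add: cocycle_top_def)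
  show "Fm \<in> topspace ?X \<rightarrow> Bwc (p_primary p)" using Fm_into[OF p pg] tX by auto
  show "continuous_map ?X (cocycle_top (p_primary p)) Fm"
    unfolding cocycle_top_def[of "p_primary p"] continuous_map_componentwise_UNIV
  proof
    fix k :: "'c \<times> 'c"
    obtain x y where k: "k = (x, y)" by (cases k)
    define D where "D = {k} \<union> (Cs (to_nat x) \<times> Cs (to_nat x)) \<union> (Cs (to_nat y) \<times> Cs (to_nat y))
       \<union> (Cs (to_nat (x + y)) \<times> Cs (to_nat (x + y)))"
    have fD: "finite D" using Cs_finite[OF p pg] by (simp add: D_def)
    show "continuous_map ?X (discrete_topology (p_primary p)) (\<lambda>c. Fm c k)"
    proof (rule cont_lc)
      show "(\<lambda>c. Fm c k) \<in> topspace ?X \<rightarrow> p_primary p"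
      proof
        fix c assume "c \<in> topspace ?X"
        then have "Fm c \<in> Zc (p_primary p)" using Fm_into[OF p pg] tX Bwc_Zc by blast
        then show "Fm c k \<in> p_primary p" unfolding k Zc_def by blast
      qed
      fix c0 assume c0: "c0 \<in> topspace ?X"
      show "\<exists>V. openin ?X V \<and> c0 \<in> V \<and> (\<forall>c\<in>V. Fm c k = Fm c0 k)"
      proof (intro exI conjI)
        show "openin ?X ({c. \<forall>d\<in>D. c d = c0 d} \<inter> Bwc UNIV)"
          by (rule openin_subtopology_Int[OF cyl_open[OF fD]])
        show "c0 \<in> {c. \<forall>d\<in>D. c d = c0 d} \<inter> Bwc UNIV" using c0 tX by auto
        show "\<forall>c \<in> {c. \<forall>d\<in>D. c d = c0 d} \<inter> Bwc UNIV. Fm c k = Fm c0 k"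
        proof
          fix c assume "c \<in> {c. \<forall>d\<in>D. c d = c0 d} \<inter> Bwc UNIV"
          then have ag: "\<forall>d\<in>D. c d = c0 d" by simp
          have Px: "Psi (to_nat x) c = Psi (to_nat x) c0"
            by (rule Psi_cong) (use ag in \<open>auto simp: D_def\<close>)
          have Py: "Psi (to_nat y) c = Psi (to_nat y) c0"
            by (rule Psi_cong) (use ag in \<open>auto simp: D_def\<close>)
          have Pxy: "Psi (to_nat (x + y)) c = Psi (to_nat (x + y)) c0"
            by (rule Psi_cong) (use ag in \<open>auto simp: D_def\<close>)
          have ck: "c k = c0 k" using ag by (simp add: D_def)
          show "Fm c k = Fm c0 k" unfolding Fm_def k cob_pair Phi_def Px Py Pxy using ck k by simp
        qed
      qed
    qed
  qed
qed

lemma piece2: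
  assumes p: "prime p" and pg: "is_p_group p TYPE('c::{ab_group_add,countable})"
    and x: "(x :: 'c \<times> 'c \<Rightarrow> 'a::{ab_group_add,countable}) \<in> Bwc UNIV" and y: "y \<in> Bwc UNIV"
    and d: "(\<lambda>u. x u - y u) \<in> Bc UNIV"
  shows "(\<lambda>u. Fm x u - Fm y u) \<in> Bc (p_primary p)"
proof -
  obtain \<theta> where th: "\<forall>a b. x (a, b) - y (a, b) = \<theta> b - \<theta> (a + b) + \<theta> a"
    using d unfolding Bc_def by blast
  have gx: "good x" using good_Bwc[OF p pg x] .
  have gy: "good y" using good_Bwc[OF p pg y] .
  have x0: "x (0, 0) = 0" using Zc_0[OF Bwc_Zc[OF x]] .
  have y0: "y (0, 0) = 0" using Zc_0[OF Bwc_Zc[OF y]] .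
  have thc: "cob \<theta> (a, b) = x (a, b) - y (a, b)" for a b :: 'c using th by simp
  have t0: "\<theta> 0 = 0" using thc[of 0 0] x0 y0 by simp
  define \<theta>' where "\<theta>' = (\<lambda>w. \<theta> w - Phi x w + Phi y w)"
  show ?thesis
  proof (rule cob_Bc[of \<theta>'])
    show "\<forall>z. \<theta>' z \<in> p_primary p"
    proof
      fix z :: 'c
      define k where "k = to_nat z"
      have zk: "z \<in> Cs k" using Cs_in[of z] by (simp add: k_def)
      have "\<theta> z - (\<lambda>w. Psi k x w - Psi k y w) z \<in> p_primary p"
      proof (rule cob_eq_primary[OF pg Cs_fs[OF p pg] _ zk])
        show "\<forall>a\<in>Cs k. \<forall>b\<in>Cs k. cob \<theta> (a, b) = cob (\<lambda>w. Psi k x w - Psi k y w) (a, b)"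
        proof (intro ballI)
          fix a b :: 'c assume ab: "a \<in> Cs k" "b \<in> Cs k"
          have "cob \<theta> (a, b) = x (a, b) - y (a, b)" by (rule thc)
          also have "... = cob (Psi k x) (a, b) - cob (Psi k y) (a, b)"
            using Psi_spec[OF gx ab] Psi_spec[OF gy ab] by simp
          also have "... = cob (\<lambda>w. Psi k x w - Psi k y w) (a, b)" by (simp only: cob_diff)
          finally show "cob \<theta> (a, b) = cob (\<lambda>w. Psi k x w - Psi k y w) (a, b)" .
        qed
      qed
      moreover have "\<theta>' z = \<theta> z - (\<lambda>w. Psi k x w - Psi k y w) z"
        by (simp add: \<theta>'_def Phi_def k_def algebra_simps)
      ultimately show "\<theta>' z \<in> p_primary p" by simp
    qed
    show "\<theta>' 0 = 0" using t0 Phi_0[OF gx x0] Phi_0[OF gy y0] by (simp add: \<theta>'_def)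
    show "0 \<in> p_primary p" "\<forall>a\<in>p_primary p. \<forall>b\<in>p_primary p. a + b \<in> p_primary p"
      "\<forall>a\<in>p_primary p. - a \<in> p_primary p" by (rule p_primary_closed)+
    show "\<forall>u. Fm x u - Fm y u = cob \<theta>' u"
    proof
      fix u :: "'c \<times> 'c"
      obtain a b where u: "u = (a, b)" by (cases u)
      have "Fm x u - Fm y u = (x u - y u) - cob (Phi x) u + cob (Phi y) u"
        by (simp add: Fm_def algebra_simps)
      also have "... = cob \<theta> u - cob (Phi x) u + cob (Phi y) u" using thc[of a b] u by simp
      also have "... = cob \<theta>' u" unfolding \<theta>'_def by (simp only: cob_lin)
      finally show "Fm x u - Fm y u = cob \<theta>' u" .
    qed
  qed
qed

lemma piece3:
  assumes p: "prime p" and pg: "is_p_group p TYPE('c::{ab_group_add,countable})"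
    and x: "(x :: 'c \<times> 'c \<Rightarrow> 'a::{ab_group_add,countable}) \<in> Bwc UNIV" and y: "y \<in> Bwc UNIV"
  shows "(\<lambda>u. Fm (\<lambda>v. x v + y v) u - (Fm x u + Fm y u)) \<in> Bc (p_primary p)"
proof -
  define s where "s = (\<lambda>v. x v + y v)"
  have gx: "good x" using good_Bwc[OF p pg x] .
  have gy: "good y" using good_Bwc[OF p pg y] .
  have gs: "good s" unfolding s_def using good_add[OF gx gy] .
  have x0: "x (0, 0) = 0" using Zc_0[OF Bwc_Zc[OF x]] .
  have y0: "y (0, 0) = 0" using Zc_0[OF Bwc_Zc[OF y]] .
  have s0: "s (0, 0) = 0" using x0 y0 by (simp add: s_def)
  define \<theta>' where "\<theta>' = (\<lambda>w. Phi x w + Phi y w - Phi s w)"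
  have "(\<lambda>u. Fm s u - (Fm x u + Fm y u)) \<in> Bc (p_primary p)"
  proof (rule cob_Bc[of \<theta>'])
    show "\<forall>z. \<theta>' z \<in> p_primary p"
    proof
      fix z :: 'c
      define k where "k = to_nat z"
      have zk: "z \<in> Cs k" using Cs_in[of z] by (simp add: k_def)
      have "(\<lambda>w. Psi k x w + Psi k y w) z - Psi k s z \<in> p_primary p"
      proof (rule cob_eq_primary[OF pg Cs_fs[OF p pg] _ zk])
        show "\<forall>a\<in>Cs k. \<forall>b\<in>Cs k. cob (\<lambda>w. Psi k x w + Psi k y w) (a, b) = cob (Psi k s) (a, b)"
        proof (intro ballI)
          fix a b :: 'c assume ab: "a \<in> Cs k" "b \<in> Cs k"
          have "cob (\<lambda>w. Psi k x w + Psi k y w) (a, b) = cob (Psi k x) (a, b) + cob (Psi k y) (a, b)"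
            by (simp only: cob_add)
          also have "... = x (a, b) + y (a, b)"
            using Psi_spec[OF gx ab] Psi_spec[OF gy ab] by simp
          also have "... = cob (Psi k s) (a, b)" using Psi_spec[OF gs ab] by (simp add: s_def)
          finally show "cob (\<lambda>w. Psi k x w + Psi k y w) (a, b) = cob (Psi k s) (a, b)" .
        qed
      qed
      moreover have "\<theta>' z = (\<lambda>w. Psi k x w + Psi k y w) z - Psi k s z"
        by (simp add: \<theta>'_def Phi_def k_def)
      ultimately show "\<theta>' z \<in> p_primary p" by simp
    qed
    show "\<theta>' 0 = 0" using Phi_0[OF gx x0] Phi_0[OF gy y0] Phi_0[OF gs s0] by (simp add: \<theta>'_def)
    show "0 \<in> p_primary p" "\<forall>a\<in>p_primary p. \<forall>b\<in>p_primary p. a + b \<in> p_primary p"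
      "\<forall>a\<in>p_primary p. - a \<in> p_primary p" by (rule p_primary_closed)+
    show "\<forall>u. Fm s u - (Fm x u + Fm y u) = cob \<theta>' u"
    proof
      fix u :: "'c \<times> 'c"
      have "Fm s u - (Fm x u + Fm y u) = (s u - x u - y u) + cob (Phi x) u + cob (Phi y) u - cob (Phi s) u"
        by (simp add: Fm_def algebra_simps)
      also have "... = cob (Phi x) u + cob (Phi y) u - cob (Phi s) u" by (simp add: s_def)
      also have "... = cob \<theta>' u" unfolding \<theta>'_def by (simp only: cob_lin2)
      finally show "Fm s u - (Fm x u + Fm y u) = cob \<theta>' u" .
    qed
  qed
  then show ?thesis by (simp add: s_def)
qed

lemma piece4:
  assumes p: "prime p" and pg: "is_p_group p TYPE('c::{ab_group_add,countable})"
    and x: "(x :: 'c \<times> 'c \<Rightarrow> 'a::{ab_group_add,countable}) \<in> Bwc UNIV" and y: "y \<in> Bwc UNIV"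
    and d: "(\<lambda>u. Fm x u - Fm y u) \<in> Bc (p_primary p)"
  shows "(\<lambda>u. x u - y u) \<in> Bc UNIV"
proof -
  obtain \<theta> where th: "\<forall>a b. Fm x (a, b) - Fm y (a, b) = \<theta> b - \<theta> (a + b) + \<theta> a"
    using d unfolding Bc_def by blast
  have thc: "cob \<theta> (a, b) = Fm x (a, b) - Fm y (a, b)" for a b :: 'c using th by simp
  have fx0: "Fm x (0, 0) = 0" using Zc_0[OF Bwc_Zc[OF Fm_into[OF p pg x]]] .
  have fy0: "Fm y (0, 0) = 0" using Zc_0[OF Bwc_Zc[OF Fm_into[OF p pg y]]] .
  have t0: "\<theta> 0 = 0" using thc[of 0 0] fx0 fy0 by simp
  have gx: "good x" using good_Bwc[OF p pg x] .
  have gy: "good y" using good_Bwc[OF p pg y] .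
  have x0: "x (0, 0) = 0" using Zc_0[OF Bwc_Zc[OF x]] .
  have y0: "y (0, 0) = 0" using Zc_0[OF Bwc_Zc[OF y]] .
  define \<theta>' where "\<theta>' = (\<lambda>w. \<theta> w + Phi x w - Phi y w)"
  show ?thesis
  proof (rule cob_Bc[of \<theta>'])
    show "\<forall>z. \<theta>' z \<in> UNIV" by simp
    show "\<theta>' 0 = 0" using t0 Phi_0[OF gx x0] Phi_0[OF gy y0] by (simp add: \<theta>'_def)
    show "(0::'a) \<in> UNIV" "\<forall>a\<in>UNIV. \<forall>b\<in>UNIV. (a::'a) + b \<in> UNIV" "\<forall>a\<in>UNIV. - (a::'a) \<in> UNIV" by simp_all
    show "\<forall>u. x u - y u = cob \<theta>' u"
    proof
      fix u :: "'c \<times> 'c"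
      obtain a b where u: "u = (a, b)" by (cases u)
      have "x u - y u = (Fm x u - Fm y u) + cob (Phi x) u - cob (Phi y) u"
        by (simp add: Fm_def algebra_simps)
      also have "... = cob \<theta> u + cob (Phi x) u - cob (Phi y) u" using thc[of a b] u by simp
      also have "... = cob \<theta>' u" unfolding \<theta>'_def by (simp only: cob_lin2)
      finally show "x u - y u = cob \<theta>' u" .
    qed
  qed
qed

lemma piece5:
  assumes p: "prime p" and pg: "is_p_group p TYPE('c::{ab_group_add,countable})"
    and z: "(z :: 'c \<times> 'c \<Rightarrow> 'a::{ab_group_add,countable}) \<in> Bwc (p_primary p)"
  shows "\<exists>x\<in>Bwc UNIV. (\<lambda>u. Fm x u - z u) \<in> Bc (p_primary p)"
proof
  show zU: "z \<in> Bwc UNIV" using z unfolding Bwc_def Zc_def by blast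
  have gz: "good z" using good_Bwc[OF p pg z] .
  have z0: "z (0, 0) = 0" using Zc_0[OF Bwc_Zc[OF z]] .
  show "(\<lambda>u. Fm z u - z u) \<in> Bc (p_primary p)"
  proof (rule cob_Bc[of "\<lambda>w. - Phi z w"])
    show "\<forall>w. - Phi z w \<in> p_primary p"
    proof
      fix w :: 'c
      define k where "k = to_nat w"
      have wk: "w \<in> Cs k" using Cs_in[of w] by (simp add: k_def)
      obtain \<psi> where \<psi>: "\<forall>a\<in>Cs k. \<psi> a \<in> p_primary p"
        "\<forall>a\<in>Cs k. \<forall>b\<in>Cs k. z (a, b) = \<psi> b - \<psi> (a + b) + \<psi> a"
        using z Cs_fs[OF p pg, of k] unfolding Bwc_def by blast
      have "\<psi> w - Psi k z w \<in> p_primary p"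
      proof (rule cob_eq_primary[OF pg Cs_fs[OF p pg] _ wk])
        show "\<forall>a\<in>Cs k. \<forall>b\<in>Cs k. cob \<psi> (a, b) = cob (Psi k z) (a, b)"
          using \<psi>(2) Psi_spec[OF gz] by simp
      qed
      then have "\<psi> w - (\<psi> w - Psi k z w) \<in> p_primary p"
        using \<psi>(1) wk p_primary_diff by blast
      then have "Psi k z w \<in> p_primary p" by simp
      then show "- Phi z w \<in> p_primary p" using p_primary_uminus by (simp add: Phi_def k_def)
    qed
    show "- Phi z 0 = 0" using Phi_0[OF gz z0] by simp
    show "0 \<in> p_primary p" "\<forall>a\<in>p_primary p. \<forall>b\<in>p_primary p. a + b \<in> p_primary p"
      "\<forall>a\<in>p_primary p. - a \<in> p_primary p" by (rule p_primary_closed)+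
    show "\<forall>u. Fm z u - z u = cob (\<lambda>w. - Phi z w) u"
      by (simp only: Fm_def cob_neg diff_add_cancel) simp
  qed
qed

theorem lemma4p5:
  fixes p :: nat
    and C :: "'c::{ab_group_add, countable} itself"
    and A :: "'a::{ab_group_add, countable} itself"
  assumes "prime p"
    and "is_p_group p C"
  shows "\<exists>f :: ('c \<times> 'c \<Rightarrow> 'a) \<Rightarrow> ('c \<times> 'c \<Rightarrow> 'a).
           PExt_borel_iso (UNIV :: 'a set) (p_primary p) f"
proof -
  have p: "prime p" by (rule assms(1))
  have pg: "is_p_group p TYPE('c)" using assms(2) by (simp add: is_p_group_def)
  have "PExt_borel_iso (UNIV :: 'a set) (p_primary p) (Fm :: ('c \<times> 'c \<Rightarrow> 'a) \<Rightarrow> _)"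
    unfolding PExt_borel_iso_def
  proof (intro conjI ballI impI)
    show "(Fm :: ('c \<times> 'c \<Rightarrow> 'a) \<Rightarrow> _) \<in> measurable (borel_of (subtopology (cocycle_top UNIV) (Bwc UNIV)))
                    (borel_of (subtopology (cocycle_top (p_primary p)) (Bwc (p_primary p))))"
      apply (rule cont_meas)
      apply (rule Fm_cont[OF p pg])
      done
  next
    fix x y :: "'c \<times> 'c \<Rightarrow> 'a"
    assume "x \<in> Bwc UNIV" "y \<in> Bwc UNIV" "(\<lambda>u. x u - y u) \<in> Bc UNIV"
    then show "(\<lambda>u. Fm x u - Fm y u) \<in> Bc (p_primary p)" by (rule piece2[OF p pg])
  next
    fix x y :: "'c \<times> 'c \<Rightarrow> 'a"
    assume "x \<in> Bwc UNIV" "y \<in> Bwc UNIV"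
    then show "(\<lambda>u. Fm (\<lambda>v. x v + y v) u - (Fm x u + Fm y u)) \<in> Bc (p_primary p)" by (rule piece3[OF p pg])
  next
    fix x y :: "'c \<times> 'c \<Rightarrow> 'a"
    assume "x \<in> Bwc UNIV" "y \<in> Bwc UNIV" "(\<lambda>u. Fm x u - Fm y u) \<in> Bc (p_primary p)"
    then show "(\<lambda>u. x u - y u) \<in> Bc UNIV" by (rule piece4[OF p pg])
  next
    fix z :: "'c \<times> 'c \<Rightarrow> 'a"
    assume "z \<in> Bwc (p_primary p)"
    then show "\<exists>x\<in>Bwc UNIV. (\<lambda>u. Fm x u - z u) \<in> Bc (p_primary p)" by (rule piece5[OF p pg])
  qed
  then show ?thesis by blast
qed


end
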